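(* Let $\varepsilon$ be an integer with $\varepsilon\equiv 2\pmod{4}$. Then there exist infinitely many positive odd integers $n$ with the property that there exist positive integers $d_1, d_2$, each dividing $\frac{n^2+1}{2}$, such that $d_1+d_2=4n+\varepsilon$. *)

theory Defs
  imports Main
begin

end

theory Submission
  imports Defs "HOL-Analysis.Kronecker_Approximation_Theorem"
begin


lemma sq_coprime_nat:
  fixes a b D :: nat
  assumes "coprime a b" "D * b^2 = a^2" "b \<noteq> 0"
  shows "D = a^2"
proof -
  have "b^2 dvd a^2" using assms(2) by (metis dvd_triv_right)
  moreover have "coprime (b^2) (a^2)" using assms(1) by (simp add: coprime_commute)
  ultimately have "is_unit (b^2)" by (metis coprime_common_divisor dvd_refl)
  hence "b = 1" by simp
  thus ?thesis using assms(2) by simp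
qed

lemma sqrt_nonsq_irrat:
  fixes D :: nat
  assumes "\<And>x. x^2 \<noteq> D"
  shows "sqrt (real D) \<notin> \<rat>"
proof
  assume "sqrt (real D) \<in> \<rat>"
  then obtain m n :: nat where mn: "n \<noteq> 0" "\<bar>sqrt (real D)\<bar> = real m / real n" "coprime m n"
    by (rule Rats_abs_nat_div_natE)
  have "sqrt (real D) * real n = real m" using mn by (simp add: field_simps)
  hence "(sqrt (real D) * real n)^2 = (real m)^2" by simp
  hence "real D * (real n)^2 = (real m)^2" by (simp add: power_mult_distrib)
  hence "D * n^2 = m^2" by (metis of_nat_eq_iff of_nat_mult of_nat_power)
  hence "D = m^2" using sq_coprime_nat mn by blast
  thus False using assms by metis
qed

lemma sq_coprime_int:
  fixes h k :: int and D :: nat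
  assumes "coprime h k" "int D * k^2 = h^2" "k \<noteq> 0"
  shows "\<exists>x::nat. x^2 = D"
proof -
  have "k^2 dvd h^2" using assms(2) by (metis dvd_triv_right)
  moreover have "coprime (k^2) (h^2)" using assms(1) by (simp add: coprime_commute)
  ultimately have "is_unit (k^2)" by (metis coprime_common_divisor dvd_refl)
  hence "k^2 = 1" by (simp add: is_unit_power_iff zdvd1_eq power2_eq_square)
  hence "int D = h^2" using assms(2) by simp
  hence "int D = int ((nat \<bar>h\<bar>)^2)" by simp
  thus ?thesis by (metis of_nat_eq_iff)
qed

theorem pell_exists:
  fixes D :: nat
  assumes nsq: "\<And>x. x^2 \<noteq> D"
  shows "\<exists>x y::int. y > 0 \<and> x^2 = 1 + int D * y^2"
proof -
  define \<theta> where "\<theta> = sqrt (real D)"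
  have irr: "\<theta> \<notin> \<rat>" using sqrt_nonsq_irrat nsq \<theta>_def by blast
  have inf: "infinite (approx_set \<theta>)" using irr rational_iff_finite_approx_set by blast
  define B :: int where "B = \<lceil>2 * \<theta> + 1\<rceil>"
  define f where "f = (\<lambda>(h::int,k::int). (h^2 - int D * k^2, h mod \<bar>h^2 - int D * k^2\<bar>, k mod \<bar>h^2 - int D * k^2\<bar>))"
  have bnd: "\<bar>h^2 - int D * k^2\<bar> \<le> B \<and> h^2 - int D * k^2 \<noteq> 0" if hk: "(h,k) \<in> approx_set \<theta>" for h k
  proof
    from hk have k0: "k > 0" and cop: "coprime h k" and ap: "\<bar>\<theta> - of_int h / of_int k\<bar> < 1 / (of_int k)^2"
      by (auto simp: approx_set_def)
    have kr: "real_of_int k \<ge> 1" using k0 by simp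
    have e1: "\<bar>of_int k * \<theta> - of_int h\<bar> < 1 / of_int k"
    proof -
      have "\<bar>of_int k * \<theta> - of_int h\<bar> = of_int k * \<bar>\<theta> - of_int h / of_int k\<bar>"
        using k0 by (simp add: field_simps abs_mult[symmetric])
      also have "\<dots> < of_int k * (1 / (of_int k)^2)" using ap k0 by (intro mult_strict_left_mono) auto
      also have "\<dots> = 1 / of_int k" using k0 by (simp add: power2_eq_square)
      finally show ?thesis .
    qed
    have th0: "\<theta> \<ge> 0" unfolding \<theta>_def by simp
    have thsq: "\<theta>^2 = real D" unfolding \<theta>_def by simp
    have "real_of_int (h^2 - int D * k^2) = (of_int h - of_int k * \<theta>) * (of_int h + of_int k * \<theta>)"
      using thsq by (simp add: algebra_simps power2_eq_square)
    hence "\<bar>real_of_int (h^2 - int D * k^2)\<bar> = \<bar>of_int k * \<theta> - of_int h\<bar> * \<bar>of_int h + of_int k * \<theta>\<bar>"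
      by (simp add: abs_mult abs_minus_commute)
    also have "\<dots> \<le> (1 / of_int k) * (1 / of_int k + 2 * of_int k * \<theta>)"
    proof (rule mult_mono)
      show "\<bar>of_int k * \<theta> - of_int h\<bar> \<le> 1 / of_int k" using e1 by simp
      have kt: "of_int k * \<theta> \<ge> 0" using th0 k0 by simp
      have "\<bar>of_int h + of_int k * \<theta>\<bar> \<le> \<bar>of_int h - of_int k * \<theta>\<bar> + 2 * of_int k * \<theta>"
        using kt by linarith
      thus "\<bar>of_int h + of_int k * \<theta>\<bar> \<le> 1 / of_int k + 2 * of_int k * \<theta>" using e1
        by (simp add: abs_minus_commute)
    qed (use k0 in auto)
    also have "\<dots> = 1 / (of_int k)^2 + 2 * \<theta>" using k0 by (simp add: field_simps power2_eq_square)
    also have "\<dots> \<le> 1 + 2 * \<theta>" using kr by (simp add: power_le_one_iff)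
    finally have "\<bar>real_of_int (h^2 - int D * k^2)\<bar> \<le> 2 * \<theta> + 1" by simp
    hence "real_of_int \<bar>h^2 - int D * k^2\<bar> \<le> 2 * \<theta> + 1" by simp
    hence "\<lceil>real_of_int \<bar>h^2 - int D * k^2\<bar>\<rceil> \<le> B" unfolding B_def by (rule ceiling_mono)
    thus "\<bar>h^2 - int D * k^2\<bar> \<le> B" by (simp only: ceiling_of_int)
    show "h^2 - int D * k^2 \<noteq> 0"
    proof
      assume "h^2 - int D * k^2 = 0"
      hence "int D * k^2 = h^2" by simp
      thus False using sq_coprime_int[OF cop] k0 nsq by auto
    qed
  qed
  have fin: "finite (f ` approx_set \<theta>)"
  proof (rule finite_subset)
    show "f ` approx_set \<theta> \<subseteq> {-B..B} \<times> {0..B} \<times> {0..B}"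
    proof (rule image_subsetI)
      fix pp assume pp: "pp \<in> approx_set \<theta>"
      obtain h k where hkp: "pp = (h,k)" by (cases pp)
      have hk: "(h,k) \<in> approx_set \<theta>" using pp hkp by simp
      define m where "m = h^2 - int D * k^2"
      have "\<bar>m\<bar> \<le> B" "m \<noteq> 0" using bnd[OF hk] m_def by auto
      hence mp: "\<bar>m\<bar> > 0" "\<bar>m\<bar> \<le> B" by auto
      have fe: "f (h,k) = (m, h mod \<bar>m\<bar>, k mod \<bar>m\<bar>)" unfolding f_def m_def by simp
      have "0 \<le> h mod \<bar>m\<bar>" "h mod \<bar>m\<bar> < \<bar>m\<bar>" "0 \<le> k mod \<bar>m\<bar>" "k mod \<bar>m\<bar> < \<bar>m\<bar>"
        using mp by simp_all
      hence "h mod \<bar>m\<bar> \<le> B" "k mod \<bar>m\<bar> \<le> B" "0 \<le> h mod \<bar>m\<bar>" "0 \<le> k mod \<bar>m\<bar>" using mp by linarith+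
      thus "f pp \<in> {-B..B} \<times> {0..B} \<times> {0..B}"
        unfolding hkp fe using mp by auto
    qed
  qed auto
  obtain a0 where a0: "a0 \<in> approx_set \<theta>" and infib: "infinite {a \<in> approx_set \<theta>. f a = f a0}"
    using pigeonhole_infinite[OF inf fin] by blast
  obtain p1 p2 where p12: "p1 \<in> {a \<in> approx_set \<theta>. f a = f a0}" "p2 \<in> {a \<in> approx_set \<theta>. f a = f a0}" "p1 \<noteq> p2"
  proof -
    obtain p1 where "p1 \<in> {a \<in> approx_set \<theta>. f a = f a0}" using infib by (metis ex_in_conv finite.emptyI)
    moreover obtain p2 where "p2 \<in> {a \<in> approx_set \<theta>. f a = f a0} - {p1}"
      using infib by (metis ex_in_conv finite.emptyI finite_Diff2 infinite_remove)
    ultimately show ?thesis using that by blast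
  qed
  obtain h1 k1 h2 k2 where P: "p1 = (h1,k1)" "p2 = (h2,k2)" by (cases p1, cases p2)
  have A1: "(h1,k1) \<in> approx_set \<theta>" and A2: "(h2,k2) \<in> approx_set \<theta>" and ff: "f (h1,k1) = f (h2,k2)"
    using p12 P by auto
  define m where "m = h1^2 - int D * k1^2"
  have m2: "h2^2 - int D * k2^2 = m" and md1: "h1 mod \<bar>m\<bar> = h2 mod \<bar>m\<bar>" and md2: "k1 mod \<bar>m\<bar> = k2 mod \<bar>m\<bar>"
    using ff unfolding f_def m_def by auto
  have m0: "m \<noteq> 0" using bnd[OF A1] m_def by auto
  have dh: "m dvd (h2 - h1)" using md1 by (metis abs_dvd_iff mod_eq_dvd_iff)
  have dk: "m dvd (k2 - k1)" using md2 by (metis abs_dvd_iff mod_eq_dvd_iff)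
  obtain u where u: "h2 - h1 = m * u" using dh by blast
  obtain v where v: "k2 - k1 = m * v" using dk by blast
  define X where "X = h1 * h2 - int D * k1 * k2"
  define Y where "Y = h1 * k2 - h2 * k1"
  have X: "X = m * (1 + h1 * u - int D * k1 * v)"
  proof -
    have "h2 = h1 + m * u" "k2 = k1 + m * v" using u v by auto
    thus ?thesis unfolding X_def using m_def by algebra
  qed
  have Y: "Y = m * (h1 * v - k1 * u)"
  proof -
    have "h2 = h1 + m * u" "k2 = k1 + m * v" using u v by auto
    thus ?thesis unfolding Y_def by algebra
  qed
  have id: "X^2 - int D * Y^2 = m^2"
  proof -
    have "X^2 - int D * Y^2 = (h1^2 - int D * k1^2) * (h2^2 - int D * k2^2)"
      unfolding X_def Y_def by (simp add: algebra_simps power2_eq_square)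
    thus ?thesis using m2 m_def by (simp add: power2_eq_square)
  qed
  define x where "x = 1 + h1 * u - int D * k1 * v"
  define y where "y = h1 * v - k1 * u"
  have "m^2 * (x^2 - int D * y^2) = m^2"
    using id X Y unfolding x_def[symmetric] y_def[symmetric] by (simp add: algebra_simps power2_eq_square)
  hence xy: "x^2 - int D * y^2 = 1" using m0 by simp
  have y0: "y \<noteq> 0"
  proof
    assume "y = 0"
    hence "Y = 0" using Y y_def by simp
    hence e: "h1 * k2 = h2 * k1" unfolding Y_def by simp
    have k10: "k1 > 0" "coprime h1 k1" using A1 by (auto simp: approx_set_def)
    have k20: "k2 > 0" "coprime h2 k2" using A2 by (auto simp: approx_set_def)
    have "k1 dvd h1 * k2" using e by simp
    hence "k1 dvd k2" using k10 by (metis coprime_commute coprime_dvd_mult_right_iff)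
    moreover have "k2 dvd h2 * k1" using e by (metis dvd_triv_right)
    hence "k2 dvd k1" using k20 by (metis coprime_commute coprime_dvd_mult_right_iff)
    ultimately have "k1 = k2" using k10 k20 by (simp add: zdvd_antisym_nonneg)
    hence "h1 = h2" using e k10 by simp
    thus False using \<open>k1 = k2\<close> p12 P by simp
  qed
  show ?thesis
    by (rule exI[of _ x], rule exI[of _ "\<bar>y\<bar>"]) (use xy y0 in \<open>auto simp: power2_abs\<close>)
qed


lemma key_n:
  fixes y X :: int
  assumes "y^2 + 16 = 32 * X"
  shows "\<exists>n. y = 4*n \<and> odd n \<and> (n^2+1) div 2 = X"
proof -
  have "y^2 = 2 * (16*X - 8)" using assms by simp
  hence "even (y^2)" by simp
  hence "even y" by simp
  then obtain y1 where y1: "y = 2*y1" by blast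
  have e1: "y1^2 + 4 = 8 * X" using assms y1 by (simp add: power_mult_distrib)
  have "y1^2 = 2 * (4*X - 2)" using e1 by simp
  hence "even (y1^2)" by simp
  hence "even y1" by simp
  then obtain n where n: "y1 = 2*n" by blast
  have e2: "n^2 + 1 = 2 * X" using e1 n by (simp add: power_mult_distrib)
  have "odd n"
  proof
    assume "even n"
    hence "even (n^2)" by simp
    hence "odd (n^2 + 1)" by simp
    thus False using e2 by simp
  qed
  moreover have "(n^2+1) div 2 = X" using e2 by simp
  ultimately show ?thesis using y1 n by auto
qed

lemma member:
  fixes g r e s t :: int
  assumes E: "(g* s - e)^2 + 16 = 8*g*r*(s^2 - t^2)" and t: "t \<ge> 0" and ev: "even (s - t)"
    and g: "g > 0" and r: "r > 0" and sp: "s > \<bar>e\<bar>"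
  shows "g* s - e = 4 * ((g* s - e) div 4) \<and> g* s - e > 0 \<and> (g* s - e) div 4 > 0 \<and> odd ((g* s - e) div 4) \<and>
      (\<exists>d1 d2::int. d1 > 0 \<and> d2 > 0 \<and> d1 dvd (((g* s - e) div 4)^2 + 1) div 2 \<and>
         d2 dvd (((g* s - e) div 4)^2 + 1) div 2 \<and> d1 + d2 = 4 * ((g* s - e) div 4) + e)"
proof -
  obtain a where a: "s - t = 2*a" using ev by blast
  have b': "s + t = 2*(a + t)" using a by simp
  define b where "b = a + t"
  have b: "s + t = 2*b" using b' b_def by simp
  have s0: "s > 0" using sp by linarith
  have gs: "g* s \<ge> 1* s" using g s0 by (intro mult_right_mono) auto
  have y0: "g* s - e > 0" using gs sp by linarith
  have "(g* s - e)^2 + 16 > 0" by (simp add: add_nonneg_pos)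
  hence "(8*g*r)*(s^2 - t^2) > 0" using E by (simp add: mult.assoc)
  moreover have "8*g*r > 0" using g r by simp
  ultimately have "s^2 - t^2 > 0" using zero_less_mult_pos by blast
  hence "t^2 < s^2" by simp
  hence st: "t < s" using t s0 by (simp add: power_less_imp_less_base)
  have ap: "a > 0" using a st by linarith
  have bp: "b > 0" using b t s0 by linarith
  have "s^2 - t^2 = (s - t) * (s + t)" by (simp add: power2_eq_square algebra_simps)
  also have "\<dots> = 4*a*b" using a b by simp
  finally have "(g* s - e)^2 + 16 = 32 * (g*r*a*b)" using E by simp
  then obtain n where n: "g* s - e = 4*n" "odd n" "(n^2+1) div 2 = g*r*a*b" using key_n by blast
  have nd: "(g* s - e) div 4 = n" using n by simp
  have np: "n > 0" using y0 n by linarith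
  have da: "g*a dvd g*r*a*b" by (simp add: mult.assoc mult.left_commute)
  have db: "g*b dvd g*r*a*b" by (simp add: mult.assoc mult.left_commute)
  have "a + b = s" using a b_def by simp
  hence "g*a + g*b = g* s" by (metis distrib_left)
  hence sum: "g*a + g*b = 4*n + e" using n by simp
  show ?thesis
    unfolding nd using y0 np n(1,2,3) da db sum g ap bp
    by (intro conjI exI[of _ "g*a"] exI[of _ "g*b"]) simp_all
qed



lemma step_eq:
  fixes g r e u0 w s t c :: int
  assumes c: "c = 8*r - g" and U: "u0^2 = 1 + 8*r*c*w^2"
    and E: "(g* s - e)^2 + 16 = 8*g*r*(s^2 - t^2)"
  shows "(g*((1 + 16*r*c*w^2)* s + 16*r*u0*w*t + 16*r*e*w^2) - e)^2 + 16
     = 8*g*r*(((1 + 16*r*c*w^2)* s + 16*r*u0*w*t + 16*r*e*w^2)^2 - (2*u0*w*(c* s+e) + (1+16*r*c*w^2)*t)^2)"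
  using c U E by algebra

lemma orbit:
  fixes g r e uu w ss tt :: int
  assumes g: "g > 0" and r: "r > 0" and cpos: "8*r - g > 0" and uu: "uu > 0" and w: "w > 0"
    and U: "uu^2 = 1 + 8*r*(8*r-g)*w^2"
    and E0: "(g* ss - e)^2 + 16 = 8*g*r*(ss^2 - tt^2)" and tt: "tt \<ge> 0"
    and X0: "(8*r-g)* ss + e > 0" and ev0: "even (ss - tt)"
  shows "infinite {n::int. n > 0 \<and> odd n \<and> (\<exists>d1 d2::int. d1 > 0 \<and> d2 > 0 \<and>
           d1 dvd (n^2 + 1) div 2 \<and> d2 dvd (n^2 + 1) div 2 \<and> d1 + d2 = 4 * n + e)}"
proof -
  define c where "c = 8*r - g"
  have c0: "c > 0" using cpos c_def by simp
  have U': "uu^2 = 1 + 8*r*c*w^2" using U c_def by simp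
  define F :: "int \<times> int \<Rightarrow> int \<times> int" where
    "F = (\<lambda>(s,t). ((1 + 16*r*c*w^2)* s + 16*r*uu*w*t + 16*r*e*w^2, 2*uu*w*(c* s+e) + (1+16*r*c*w^2)*t))"
  define Inv where "Inv = (\<lambda>(s::int,t::int). (g* s - e)^2 + 16 = 8*g*r*(s^2 - t^2) \<and> t \<ge> 0 \<and> c* s + e > 0 \<and> even (s - t))"
  have step: "Inv (F p) \<and> fst (F p) \<ge> fst p + 1" if ip: "Inv p" for p
  proof -
    obtain s t where p: "p = (s,t)" by (cases p)
    have E: "(g* s - e)^2 + 16 = 8*g*r*(s^2 - t^2)" and t: "t \<ge> 0" and X: "c* s + e > 0" and ev: "even (s - t)"
      using ip p Inv_def by auto
    define s' where "s' = (1 + 16*r*c*w^2)* s + 16*r*uu*w*t + 16*r*e*w^2"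
    define t' where "t' = 2*uu*w*(c* s+e) + (1+16*r*c*w^2)*t"
    have Fp: "F (s,t) = (s', t')" unfolding F_def s'_def t'_def by simp
    have E': "(g* s' - e)^2 + 16 = 8*g*r*(s'^2 - t'^2)"
      unfolding s'_def t'_def using step_eq[OF c_def U' E] .
    have ds: "s' - s = 16*r*w*(w*(c* s + e) + uu*t)" unfolding s'_def by (simp add: algebra_simps power2_eq_square)
    have "w*(c* s + e) > 0" using w X by simp
    moreover have "uu*t \<ge> 0" using uu t by simp
    ultimately have pos1: "w*(c* s + e) + uu*t > 0" by linarith
    have "16*r*w*(w*(c* s + e) + uu*t) > 0" using r w pos1 by simp
    hence sgt: "s' \<ge> s + 1" using ds by linarith
    have "2*uu*w*(c* s+e) > 0" using uu w X by simp
    moreover have "(1+16*r*c*w^2)*t \<ge> 0" using r c0 t by simp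
    ultimately have t': "t' \<ge> 0" unfolding t'_def by linarith
    have "c* s' \<ge> c* s" using sgt c0 by simp
    hence X': "c* s' + e > 0" using X by linarith
    have "s' - t' = (s - t) + 2*(8*r*c*w^2* s + 8*r*uu*w*t + 8*r*e*w^2 - uu*w*(c* s+e) - 8*r*c*w^2*t)"
      unfolding s'_def t'_def by (simp add: algebra_simps)
    hence ev': "even (s' - t')" using ev by simp
    show ?thesis using E' t' X' ev' sgt unfolding p Fp Inv_def by simp
  qed
  define st where "st = (\<lambda>i. (F ^^ i) (ss, tt))"
  have inv: "Inv (st i) \<and> fst (st i) \<ge> ss + int i" for i
  proof (induction i)
    case 0
    then show ?case unfolding st_def Inv_def using E0 tt X0 ev0 c_def by simp
  next
    case (Suc i)
    have "st (Suc i) = F (st i)" unfolding st_def by simp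
    then show ?case using step[of "st i"] Suc by auto
  qed
  have mono: "fst (st i) < fst (st (Suc i))" for i
  proof -
    have "st (Suc i) = F (st i)" unfolding st_def by simp
    thus ?thesis using step[of "st i"] inv[of i] by auto
  qed
  hence smono: "strict_mono (\<lambda>i. fst (st i))" by (simp add: strict_mono_Suc_iff)
  define I where "I = nat (\<bar>e\<bar> + 1 - ss)"
  define S where "S = {n::int. n > 0 \<and> odd n \<and> (\<exists>d1 d2::int. d1 > 0 \<and> d2 > 0 \<and>
           d1 dvd (n^2 + 1) div 2 \<and> d2 dvd (n^2 + 1) div 2 \<and> d1 + d2 = 4 * n + e)}"
  define nn where "nn = (\<lambda>i. (g * fst (st i) - e) div 4)"
  have memb: "nn i \<in> S \<and> g * fst (st i) - e = 4 * nn i" if iI: "i \<ge> I" for i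
  proof -
    obtain s t where p: "st i = (s,t)" by (cases "st i")
    have E: "(g* s - e)^2 + 16 = 8*g*r*(s^2 - t^2)" and t: "t \<ge> 0" and ev: "even (s - t)"
      and sge: "s \<ge> ss + int i"
      using inv[of i] p Inv_def by auto
    have "int i \<ge> \<bar>e\<bar> + 1 - ss" using iI I_def by linarith
    hence sp: "s > \<bar>e\<bar>" using sge by linarith
    have M: "g* s - e = 4 * ((g* s - e) div 4) \<and> g* s - e > 0 \<and> (g* s - e) div 4 > 0 \<and> odd ((g* s - e) div 4) \<and>
      (\<exists>d1 d2::int. d1 > 0 \<and> d2 > 0 \<and> d1 dvd (((g* s - e) div 4)^2 + 1) div 2 \<and>
         d2 dvd (((g* s - e) div 4)^2 + 1) div 2 \<and> d1 + d2 = 4 * ((g* s - e) div 4) + e)"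
      using member[OF E t ev g r sp] .
    have n4: "nn i = (g* s - e) div 4" unfolding nn_def p by simp
    show ?thesis unfolding n4 S_def mem_Collect_eq p fst_conv using M by blast
  qed
  have nnmono: "nn i < nn j" if "I \<le> i" "i < j" for i j
  proof -
    have "fst (st i) < fst (st j)" using smono that(2) unfolding strict_mono_def by blast
    hence "g * fst (st i) < g * fst (st j)" using g by simp
    thus ?thesis using memb[of i] memb[of j] that by linarith
  qed
  have inj: "inj_on nn {I..}"
  proof (rule inj_onI)
    fix i j assume "i \<in> {I..}" "j \<in> {I..}" "nn i = nn j"
    thus "i = j" using nnmono[of i j] nnmono[of j i] by (metis atLeast_iff linorder_neqE_nat less_irrefl)
  qed
  have sub: "nn ` {I..} \<subseteq> S" using memb by auto
  have "infinite (nn ` {I..})" using inj finite_imageD infinite_Ici by blast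
  hence "infinite S" using sub finite_subset by blast
  thus ?thesis unfolding S_def .
qed

lemma nonsq8:
  fixes x m :: int
  assumes "odd m"
  shows "x^2 \<noteq> 8*m"
proof
  assume h: "x^2 = 8*m"
  hence "even (x^2)" by simp
  hence "even x" by simp
  then obtain y where y: "x = 2*y" by blast
  have h2: "y^2 = 2*m" using h y by (simp add: power_mult_distrib)
  hence "even (y^2)" by simp
  hence "even y" by simp
  then obtain z where z: "y = 2*z" by blast
  have "m = 2*z^2" using h2 z by (simp add: power_mult_distrib)
  thus False using assms by simp
qed

theorem theorem2:
  fixes \<epsilon> :: int
  assumes "\<epsilon> mod 4 = 2"
  shows "infinite {n :: int. n > 0 \<and> odd n \<and>
           (\<exists>d1 d2 :: int. d1 > 0 \<and> d2 > 0 \<and> d1 dvd (n^2 + 1) div 2 \<and>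
              d2 dvd (n^2 + 1) div 2 \<and> d1 + d2 = 4 * n + \<epsilon>)}"
proof -
  have "\<exists>j. \<epsilon> = 8*j + 2 \<or> \<epsilon> = 8*j + 6" using assms by presburger
  then obtain j where cases: "\<epsilon> = 8*j + 2 \<or> \<epsilon> = 8*j + 6" by blast
  show ?thesis
  proof (cases "\<epsilon> = 8*j + 6")
    case True
    define r where "r = 2*j^2 + 2*j + 1"
    have "2*r = (2*j+1)^2 + 1" unfolding r_def by (simp add: power2_eq_square algebra_simps)
    hence r0: "r > 0" by (smt (verit) zero_le_power2)
    show ?thesis
    proof (rule orbit[where g=1 and r=r and e=\<epsilon> and uu="16*r - 1" and w=2 and ss=2 and tt=0])
      show "(1::int) > 0" "r > 0" "8*r - 1 > 0" "16*r - 1 > 0" "(2::int) > 0" "(0::int) \<le> 0" "even ((2::int) - 0)"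
        using r0 by simp_all
      show "(16*r - 1)^2 = 1 + 8*r*(8*r-1)*2^2" by (simp add: power2_eq_square algebra_simps)
      show "(1*2 - \<epsilon>)^2 + 16 = 8*1*r*(2^2 - 0^2)" unfolding True r_def
        by (simp add: power2_eq_square algebra_simps)
      have "2*(32*j^2 + 40*j + 20) = (8*j+5)^2 + 15" by (simp add: power2_eq_square algebra_simps)
      hence "32*j^2 + 40*j + 20 > 0" by (smt (verit) zero_le_power2)
      thus "(8*r - 1)*2 + \<epsilon> > 0" unfolding True r_def by (simp add: algebra_simps power2_eq_square)
    qed
  next
    case False
    hence E2: "\<epsilon> = 8*j + 2" using cases by simp
    define g where "g = 16*j^2 + 8*j + 5"
    define r where "r = 8*j^4 + 4*j^2 + 1"
    define c where "c = 64*j^4 + 16*j^2 - 8*j + 3"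
    define s0 where "s0 = 16*j^2 - 8*j + 6"
    define t0 where "t0 = 16*j^2 - 8*j + 4"
    have cdef: "c = 8*r - g" unfolding c_def r_def g_def by simp
    have "16*j^2 - 8*j + 3 = (4*j - 1)^2 + 2" by (simp add: power2_eq_square algebra_simps)
    hence q1: "16*j^2 - 8*j + 3 > 0" by (smt (verit) zero_le_power2)
    have j4: "j^4 \<ge> 0" by (simp add: zero_le_even_power)
    have "g = (4*j+1)^2 + 4" unfolding g_def by (simp add: power2_eq_square algebra_simps)
    hence g0: "g > 0" by (smt (verit) zero_le_power2)
    have "j^2 \<ge> 0" by simp
    hence r0: "r > 0" unfolding r_def using j4 by linarith
    have c0: "c > 0" unfolding c_def using j4 q1 by linarith
    have s00: "s0 > 0" unfolding s0_def using q1 by linarith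
    have t00: "t0 \<ge> 0" unfolding t0_def using q1 by linarith
    have "r = 2*(4*j^4 + 2*j^2) + 1" unfolding r_def by simp
    hence oddr: "odd r" by (simp add: even_add)
    have "c = 2*(32*j^4 + 8*j^2 - 4*j + 1) + 1" unfolding c_def by simp
    hence oddc: "odd c" by (simp add: even_add)
    have Npos: "8*r*c > 0" using r0 c0 by simp
    have "odd (r*c)" using oddr oddc by simp
    hence nsq: "\<And>x::nat. x^2 \<noteq> nat (8*r*c)"
    proof -
      fix x :: nat
      have "(int x)^2 \<noteq> 8*(r*c)" using nonsq8 \<open>odd (r*c)\<close> by blast
      show "x^2 \<noteq> nat (8*r*c)"
      proof
        assume "x^2 = nat (8*r*c)"
        hence "int (x^2) = 8*r*c" using Npos by simp
        hence "(int x)^2 = 8*(r*c)" by (simp add: mult.assoc)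
        thus False using \<open>(int x)^2 \<noteq> 8*(r*c)\<close> by simp
      qed
    qed
    obtain x y :: int where xy: "y > 0" "x^2 = 1 + int (nat (8*r*c)) * y^2"
      using pell_exists[OF nsq] by blast
    have xy2: "\<bar>x\<bar>^2 = 1 + 8*r*(8*r-g)*y^2" using xy Npos cdef by simp
    have x0: "\<bar>x\<bar> > 0"
    proof -
      have "int (nat (8*r*c)) * y^2 \<ge> 0" by simp
      hence "x^2 > 0" using xy by linarith
      thus ?thesis by auto
    qed
    show ?thesis
    proof (rule orbit[where g=g and r=r and e=\<epsilon> and uu="\<bar>x\<bar>" and w=y and ss=s0 and tt=t0])
      show "g > 0" "r > 0" "\<bar>x\<bar> > 0" "y > 0" "t0 \<ge> 0" using g0 r0 x0 xy t00 by simp_all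
      show "8*r - g > 0" using c0 cdef by simp
      show "\<bar>x\<bar>^2 = 1 + 8*r*(8*r-g)*y^2" by (fact xy2)
      show "even (s0 - t0)" unfolding s0_def t0_def by simp
      have d: "s0^2 - t0^2 = 4*(16*j^2 - 8*j + 5)" unfolding s0_def t0_def
        by (simp add: power2_eq_square algebra_simps)
      have l: "g* s0 - \<epsilon> = 256*j^4 + 112*j^2 + 28" unfolding E2 g_def s0_def
        by (simp add: power2_eq_square power4_eq_xxxx algebra_simps)
      have "(256*j^4 + 112*j^2 + 28)^2 + 16 = 8*g*r*(4*(16*j^2 - 8*j + 5))" unfolding g_def r_def
        by (simp add: power2_eq_square power4_eq_xxxx algebra_simps)
      thus "(g* s0 - \<epsilon>)^2 + 16 = 8*g*r*(s0^2 - t0^2)" using d l by simp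
      have "c* s0 \<ge> 1* s0" using c0 s00 by (intro mult_right_mono) auto
      moreover have "s0 + \<epsilon> = 16*j^2 + 8" unfolding s0_def E2 by simp
      moreover have "j^2 \<ge> 0" by simp
      ultimately have "(8*r - g)* s0 + \<epsilon> \<ge> s0 + \<epsilon>" "s0 + \<epsilon> > 0" using cdef by (simp, linarith)
      thus "(8*r - g)* s0 + \<epsilon> > 0" by linarith
    qed
  qed
qed

end
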